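(* Let $\Gamma$ be a cubic distance-regular graph with at least $10$ vertices, diameter at least $3$, intersection number $b_2=2$ and girth $g(\Gamma)\ge7$, and let $(u_{ij})$ be the generators of $C(G_{aut}^+(\Gamma))$. Let $i,j,k,l$ be vertices with $d(i,k)=d(j,l)=3$. Let $x$ be the unique neighbor of $j$ with $d(x,l)=2$, and let $q$ be the unique neighbor of $x$ with $d(q,j)=2$ and $d(q,l)=3$. Then $$u_{ij}u_{kl}=u_{ij}u_{kl}(u_{ij}+u_{iq}).$$
   Context: A connected regular graph $\Gamma=(V,E)$ of diameter $D$ is distance-regular with intersection array $\{b_0,\dots,b_{D-1};c_1,\dots,c_D\}$ if for any vertices $v,w$ with $d(v,w)=i$, exactly $b_i$ neighbors of $w$ are at distance $i+1$ from $v$ and exactly $c_i$ neighbors of $w$ are at distance $i-1$ from $v$ ($d$ the graph distance). Cubic means $3$-regular; the girth is the length of a shortest cycle. $C(G_{aut}^+(\Gamma))$ is the universal unital $C^*$-algebra generated by $u_{ij}$, $i,j\in V=\{1,\dots,n\}$, with relations: (R1) $u_{ij}=u_{ij}^*=u_{ij}^2$; (R2) $\sum_{l} u_{il}=1=\sum_{l} u_{li}$ for all $i$; (R3) $u_{ij}u_{kl}=u_{kl}u_{ij}=0$ whenever exactly one of $(i,k)\in E$, $(j,l)\in E$ holds. *)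

theory Defs
  imports "HOL-Analysis.Analysis"
begin

definition simple_graph :: "'v set \<Rightarrow> ('v \<Rightarrow> 'v \<Rightarrow> bool) \<Rightarrow> bool" where
  "simple_graph V E \<longleftrightarrow> finite V \<and> (\<forall>a b. E a b \<longrightarrow> a \<in> V \<and> b \<in> V) \<and>
     (\<forall>a b. E a b \<longrightarrow> E b a) \<and> (\<forall>a. \<not> E a a)"

definition connected_graph :: "'v set \<Rightarrow> ('v \<Rightarrow> 'v \<Rightarrow> bool) \<Rightarrow> bool" where
  "connected_graph V E \<longleftrightarrow> (\<forall>v\<in>V. \<forall>w\<in>V. \<exists>k. (E ^^ k) v w)"

definition gdist :: "('v \<Rightarrow> 'v \<Rightarrow> bool) \<Rightarrow> 'v \<Rightarrow> 'v \<Rightarrow> nat" where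
  "gdist E v w = (LEAST k. (E ^^ k) v w)"

definition regular_graph :: "'v set \<Rightarrow> ('v \<Rightarrow> 'v \<Rightarrow> bool) \<Rightarrow> nat \<Rightarrow> bool" where
  "regular_graph V E d \<longleftrightarrow> (\<forall>v\<in>V. card {w\<in>V. E v w} = d)"

definition diameter :: "'v set \<Rightarrow> ('v \<Rightarrow> 'v \<Rightarrow> bool) \<Rightarrow> nat" where
  "diameter V E = Max {gdist E v w | v w. v \<in> V \<and> w \<in> V}"

definition intersection_numbers ::
  "'v set \<Rightarrow> ('v \<Rightarrow> 'v \<Rightarrow> bool) \<Rightarrow> (nat \<Rightarrow> nat) \<Rightarrow> (nat \<Rightarrow> nat) \<Rightarrow> bool" where
  "intersection_numbers V E b c \<longleftrightarrow>
     (\<forall>v\<in>V. \<forall>w\<in>V.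
        card {x\<in>V. E w x \<and> gdist E v x = gdist E v w + 1} = b (gdist E v w) \<and>
        (gdist E v w \<ge> 1 \<longrightarrow>
           card {x\<in>V. E w x \<and> gdist E v x = gdist E v w - 1} = c (gdist E v w)))"

definition distance_regular_graph ::
  "'v set \<Rightarrow> ('v \<Rightarrow> 'v \<Rightarrow> bool) \<Rightarrow> (nat \<Rightarrow> nat) \<Rightarrow> (nat \<Rightarrow> nat) \<Rightarrow> bool" where
  "distance_regular_graph V E b c \<longleftrightarrow>
     simple_graph V E \<and> connected_graph V E \<and> V \<noteq> {} \<and>
     (\<exists>d. regular_graph V E d) \<and> intersection_numbers V E b c"

definition has_cycle_of_length :: "('v \<Rightarrow> 'v \<Rightarrow> bool) \<Rightarrow> nat \<Rightarrow> bool" where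
  "has_cycle_of_length E k \<longleftrightarrow> 3 \<le> k \<and>
     (\<exists>xs. length xs = k \<and> distinct xs \<and> (\<forall>i<k. E (xs ! i) (xs ! ((i + 1) mod k))))"

definition girth_at_least :: "('v \<Rightarrow> 'v \<Rightarrow> bool) \<Rightarrow> nat \<Rightarrow> bool" where
  "girth_at_least E m \<longleftrightarrow> (\<forall>k. has_cycle_of_length E k \<longrightarrow> m \<le> k)"

text \<open>A unital (complex) C*-algebra, carried by a real unital Banach algebra type 'a,
  with a central element iota (iota^2 = -1) giving the complex scalar multiplication
  (a + ib) x := a x + b (iota x), an involution st, and the C*-identity.\<close>
definition cstar_algebra :: "('a::{real_normed_algebra_1,banach} \<Rightarrow> 'a) \<Rightarrow> 'a \<Rightarrow> bool" where
  "cstar_algebra st iota \<longleftrightarrow>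
     (\<forall>x. iota * x = x * iota) \<and> iota * iota = -1 \<and>
     (\<forall>(a::real) (b::real) x. norm (a *\<^sub>R x + b *\<^sub>R (iota * x)) = sqrt (a\<^sup>2 + b\<^sup>2) * norm x) \<and>
     (\<forall>x. st (st x) = x) \<and> (\<forall>x y. st (x + y) = st x + st y) \<and>
     (\<forall>(a::real) x. st (a *\<^sub>R x) = a *\<^sub>R st x) \<and> st iota = - iota \<and>
     (\<forall>x y. st (x * y) = st y * st x) \<and>
     (\<forall>x. norm (st x * x) = (norm x)\<^sup>2)"

text \<open>A family u satisfying the defining relations (R1)-(R3) of C(G_aut^+(Gamma)).\<close>
definition qaut_relations ::
  "'v set \<Rightarrow> ('v \<Rightarrow> 'v \<Rightarrow> bool) \<Rightarrow> ('a::{real_normed_algebra_1,banach} \<Rightarrow> 'a) \<Rightarrow> ('v \<Rightarrow> 'v \<Rightarrow> 'a) \<Rightarrow> bool" where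
  "qaut_relations V E st u \<longleftrightarrow>
     (\<forall>i\<in>V. \<forall>j\<in>V. u i j = st (u i j) \<and> u i j = u i j * u i j) \<and>
     (\<forall>i\<in>V. (\<Sum>l\<in>V. u i l) = 1 \<and> (\<Sum>l\<in>V. u l i) = 1) \<and>
     (\<forall>i\<in>V. \<forall>j\<in>V. \<forall>k\<in>V. \<forall>l\<in>V. (E i k \<noteq> E j l) \<longrightarrow>
        u i j * u k l = 0 \<and> u k l * u i j = 0)"

end

theory Submission
  imports Defs
begin

locale cg =
  fixes V :: "'v set" and E :: "'v \<Rightarrow> 'v \<Rightarrow> bool"
  assumes fin: "finite V"
    and inV: "E a b \<Longrightarrow> a \<in> V \<and> b \<in> V"
    and esym: "E a b \<Longrightarrow> E b a"
    and irr: "\<not> E a a"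
    and conn: "v \<in> V \<Longrightarrow> w \<in> V \<Longrightarrow> \<exists>k. (E ^^ k) v w"
    and deg: "v \<in> V \<Longrightarrow> card {w\<in>V. E v w} = 3"
    and girth: "girth_at_least E 7"
begin

lemma inV1: "E a b \<Longrightarrow> a \<in> V" and inV2: "E a b \<Longrightarrow> b \<in> V"
  using inV by auto

lemma relpow_sym: "(E ^^ n) a b \<Longrightarrow> (E ^^ n) b a"
proof (induction n arbitrary: a b)
  case 0 thus ?case by simp
next
  case (Suc n)
  from Suc.prems obtain c where c: "(E ^^ n) a c" "E c b" by (auto elim: relpowp_Suc_E)
  have "(E ^^ n) c a" using Suc.IH c(1) .
  then show ?case using relpowp_Suc_I2[of E b c n a] esym[OF c(2)] by blast
qed

lemma d_walk: "v \<in> V \<Longrightarrow> w \<in> V \<Longrightarrow> (E ^^ (gdist E v w)) v w"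
  unfolding gdist_def by (rule LeastI_ex) (rule conn)

lemma d_le: "(E ^^ k) v w \<Longrightarrow> gdist E v w \<le> k"
  unfolding gdist_def by (rule Least_le)

lemma d_self[simp]: "gdist E v v = 0"
  using d_le[of 0 v v] by simp

lemma d_eq0: "v \<in> V \<Longrightarrow> w \<in> V \<Longrightarrow> gdist E v w = 0 \<Longrightarrow> v = w"
  using d_walk[of v w] by simp

lemma d_sym: "v \<in> V \<Longrightarrow> w \<in> V \<Longrightarrow> gdist E v w = gdist E w v"
  by (meson antisym d_le d_walk relpow_sym)

lemma d_edge: "E v w \<Longrightarrow> gdist E v w = 1"
proof -
  assume e: "E v w"
  have "gdist E v w \<le> 1" using d_le[of 1 v w] e by (simp add: relcompp_apply)
  moreover have "gdist E v w \<noteq> 0" using d_eq0[of v w] e irr inV by blast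
  ultimately show ?thesis by simp
qed

lemma d_one: "v \<in> V \<Longrightarrow> w \<in> V \<Longrightarrow> gdist E v w = 1 \<Longrightarrow> E v w"
  using d_walk[of v w] by (simp add: relcompp_apply)

lemma d_tri: "v \<in> V \<Longrightarrow> E w w' \<Longrightarrow> gdist E v w' \<le> gdist E v w + 1"
proof -
  assume v: "v \<in> V" and e: "E w w'"
  have "(E ^^ Suc (gdist E v w)) v w'"
    using d_walk[OF v inV1[OF e]] e by (rule relpowp_Suc_I)
  then show ?thesis using d_le by fastforce
qed

lemma d_step: "v \<in> V \<Longrightarrow> w \<in> V \<Longrightarrow> gdist E v w = Suc n \<Longrightarrow> \<exists>c. E v c \<and> gdist E c w = n"
proof -
  assume v: "v \<in> V" and w: "w \<in> V" and dn: "gdist E v w = Suc n"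
  have "(E ^^ Suc n) v w" using d_walk[OF v w] dn by simp
  then obtain c where c: "E v c" "(E ^^ n) c w" using relpowp_Suc_D2 by metis
  have "gdist E c w \<le> n" using d_le c(2) .
  moreover have "gdist E w v \<le> gdist E w c + 1" using d_tri[OF w esym[OF c(1)]] .
  ultimately have "gdist E c w = n" using dn d_sym[OF v w] d_sym[OF w inV2[OF c(1)]] by simp
  then show ?thesis using c by blast
qed

lemma d_step': "v \<in> V \<Longrightarrow> w \<in> V \<Longrightarrow> gdist E v w = Suc n \<Longrightarrow> \<exists>c. E c w \<and> gdist E v c = n"
proof -
  assume v: "v \<in> V" and w: "w \<in> V" and dn: "gdist E v w = Suc n"
  obtain c where "E w c" "gdist E c v = n" using d_step[OF w v] dn d_sym[OF v w] by auto
  then show ?thesis using esym d_sym[OF v inV2] by metis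
qed

lemma cyc: "has_cycle_of_length E k \<Longrightarrow> 7 \<le> k"
  using girth unfolding girth_at_least_def by blast

lemma no3: "E a b \<Longrightarrow> E b c \<Longrightarrow> E c a \<Longrightarrow> False"
proof -
  assume h: "E a b" "E b c" "E c a"
  have "has_cycle_of_length E 3"
    unfolding has_cycle_of_length_def
  proof (intro conjI exI[of _ "[a,b,c]"])
    show "distinct [a,b,c]" using h irr by auto
    show "\<forall>i<3. E ([a,b,c] ! i) ([a,b,c] ! ((i + 1) mod 3))"
    proof (intro allI impI)
      fix i :: nat assume "i < 3"
      then have "i = 0 \<or> i = 1 \<or> i = 2" by auto
      then show "E ([a,b,c] ! i) ([a,b,c] ! ((i + 1) mod 3))" using h by auto
    qed
  qed auto
  then show False using cyc by fastforce
qed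

lemma no4: "E a b \<Longrightarrow> E b c \<Longrightarrow> E c e \<Longrightarrow> E e a \<Longrightarrow> a \<noteq> c \<Longrightarrow> b \<noteq> e \<Longrightarrow> False"
proof -
  assume h: "E a b" "E b c" "E c e" "E e a" "a \<noteq> c" "b \<noteq> e"
  have "has_cycle_of_length E 4"
    unfolding has_cycle_of_length_def
  proof (intro conjI exI[of _ "[a,b,c,e]"])
    show "distinct [a,b,c,e]" using h irr by auto
    show "\<forall>i<4. E ([a,b,c,e] ! i) ([a,b,c,e] ! ((i + 1) mod 4))"
    proof (intro allI impI)
      fix i :: nat assume "i < 4"
      then have "i = 0 \<or> i = 1 \<or> i = 2 \<or> i = 3" by auto
      then show "E ([a,b,c,e] ! i) ([a,b,c,e] ! ((i + 1) mod 4))" using h by auto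
    qed
  qed auto
  then show False using cyc by fastforce
qed

lemma no6: "E a1 a2 \<Longrightarrow> E a2 a3 \<Longrightarrow> E a3 a4 \<Longrightarrow> E a4 a5 \<Longrightarrow> E a5 a6 \<Longrightarrow> E a6 a1
   \<Longrightarrow> distinct [a1,a2,a3,a4,a5,a6] \<Longrightarrow> False"
proof -
  assume h: "E a1 a2" "E a2 a3" "E a3 a4" "E a4 a5" "E a5 a6" "E a6 a1" "distinct [a1,a2,a3,a4,a5,a6]"
  have "has_cycle_of_length E 6"
    unfolding has_cycle_of_length_def
  proof (intro conjI exI[of _ "[a1,a2,a3,a4,a5,a6]"])
    show "\<forall>i<6. E ([a1,a2,a3,a4,a5,a6] ! i) ([a1,a2,a3,a4,a5,a6] ! ((i + 1) mod 6))"
    proof (intro allI impI)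
      fix i :: nat assume "i < 6"
      then have "i = 0 \<or> i = 1 \<or> i = 2 \<or> i = 3 \<or> i = 4 \<or> i = 5" by auto
      then show "E ([a1,a2,a3,a4,a5,a6] ! i) ([a1,a2,a3,a4,a5,a6] ! ((i + 1) mod 6))" using h by auto
    qed
  qed (use h in auto)
  then show False using cyc by fastforce
qed

lemma nbr3: "E v a \<Longrightarrow> E v b \<Longrightarrow> E v c \<Longrightarrow> a \<noteq> b \<Longrightarrow> a \<noteq> c \<Longrightarrow> b \<noteq> c \<Longrightarrow> E v w
   \<Longrightarrow> w = a \<or> w = b \<or> w = c"
proof -
  assume h: "E v a" "E v b" "E v c" "a \<noteq> b" "a \<noteq> c" "b \<noteq> c" "E v w"
  have v: "v \<in> V" using inV h by blast
  have sub: "{a,b,c} \<subseteq> {w\<in>V. E v w}" using h inV by auto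
  have "card {a,b,c} = 3" using h by auto
  then have "{a,b,c} = {w\<in>V. E v w}"
    using card_subset_eq[OF _ sub] deg[OF v] fin by auto
  then show ?thesis using h inV by blast
qed

lemma cn_uniq: "E a s \<Longrightarrow> E s c \<Longrightarrow> E a t \<Longrightarrow> E t c \<Longrightarrow> a \<noteq> c \<Longrightarrow> s = t"
  using no4 esym by metis

lemma uniq_mid:
  assumes v: "v \<in> V" and w: "w \<in> V" and dvw: "gdist E v w = 3"
    and e1: "E w s1" and e2: "E w s2" and d1: "gdist E v s1 = 2" and d2: "gdist E v s2 = 2"
  shows "s1 = s2"
proof (rule ccontr)
  assume ne: "s1 \<noteq> s2"
  have s1: "s1 \<in> V" and s2: "s2 \<in> V" using inV e1 e2 by auto
  obtain w1 where w1: "E v w1" "gdist E w1 s1 = 1" using d_step[OF v s1] d1 by auto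
  obtain w2 where w2: "E v w2" "gdist E w2 s2 = 1" using d_step[OF v s2] d2 by auto
  have e1': "E w1 s1" using d_one w1 inV s1 by blast
  have e2': "E w2 s2" using d_one w2 inV s2 by blast
  have dw1: "gdist E v w1 = 1" "gdist E v w2 = 1" using d_edge w1 w2 by auto
  show False
  proof (cases "w1 = w2")
    case True
    have "w1 \<noteq> w" using dw1 dvw by auto
    then show False using no4[of w1 s1 w s2] e1' e2' e1 e2 esym True ne by blast
  next
    case False
    have "distinct [v,w1,s1,w,s2,w2]" using False ne dw1 d1 d2 dvw
      by auto
    then show False using no6[of v w1 s1 w s2 w2] e1' e2' e1 e2 esym w1 w2 by blast
  qed
qed


lemma branch:
  assumes y: "E y x" "E y p" "E y l" and xp: "x \<noteq> p" and dxl: "gdist E x l = 2" and dpl: "gdist E p l = 2"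
    and l': "l' \<in> V" "l' \<noteq> l" and dx: "gdist E x l' = 2" and dp: "gdist E p l' = 2"
  shows False
proof -
  have x: "x \<in> V" and p: "p \<in> V" and yV: "y \<in> V" using y inV by auto
  obtain w1 where w1: "E x w1" "gdist E w1 l' = 1" using d_step[OF x l'(1)] dx by auto
  obtain w2 where w2: "E p w2" "gdist E w2 l' = 1" using d_step[OF p l'(1)] dp by auto
  have e1: "E w1 l'" using d_one w1 inV l' by blast
  have e2: "E w2 l'" using d_one w2 inV l' by blast
  have xl: "x \<noteq> l" using dxl by auto
  have pl: "p \<noteq> l" using dpl by auto
  have nb: "E y z \<Longrightarrow> z = x \<or> z = p \<or> z = l" for z using nbr3[OF y xp xl pl] by blast
  have c1: "w1 \<noteq> y"
  proof
    assume "w1 = y" then have "E y l'" using e1 by simp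
    then show False using nb[of l'] dx dp l'(2) by auto
  qed
  have c2: "w2 \<noteq> y"
  proof
    assume "w2 = y" then have "E y l'" using e2 by simp
    then show False using nb[of l'] dx dp l'(2) by auto
  qed
  show False
  proof (cases "w1 = w2")
    case True
    then show False using no4[of x y p w1] y w1 w2 esym xp c1 by blast
  next
    case False
    have yl': "y \<noteq> l'" using d_edge[OF esym[OF y(1)]] dx by auto
    have xw2: "x \<noteq> w2" using no3[of x y p] y w2 esym by blast
    have pw1: "p \<noteq> w1" using no3[of x y p] y w1 esym by blast
    have "distinct [x,y,p,w2,l',w1]" using False c1 c2 yl' xw2 pw1 xp irr dx dp y w1 w2 e1 e2
      by auto
    then show False using no6[of x y p w2 l' w1] y w1 w2 e1 e2 esym by blast
  qed
qed

definition qr :: "('v \<Rightarrow> 'v \<Rightarrow> 'a::real_algebra_1) \<Rightarrow> bool" where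
  "qr u \<longleftrightarrow> (\<forall>i\<in>V. (\<Sum>l\<in>V. u i l) = 1 \<and> (\<Sum>l\<in>V. u l i) = 1) \<and>
     (\<forall>i\<in>V. \<forall>j\<in>V. \<forall>k\<in>V. \<forall>l\<in>V. (E i k \<noteq> E j l) \<longrightarrow> u i j * u k l = 0)"

lemma qr_T: "qr u \<Longrightarrow> qr (\<lambda>a b. u b a)"
  unfolding qr_def by metis

lemma r3: "qr u \<Longrightarrow> a \<in> V \<Longrightarrow> b \<in> V \<Longrightarrow> c \<in> V \<Longrightarrow> e \<in> V \<Longrightarrow> E a c \<noteq> E b e \<Longrightarrow> u a b * u c e = 0"
  unfolding qr_def by blast

lemma ins_row: assumes "qr u" "t \<in> V" shows "A * B = (\<Sum>s\<in>V. A * u t s * B)"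
proof -
  have "A * B = A * (\<Sum>s\<in>V. u t s) * B" using assms unfolding qr_def by simp
  also have "\<dots> = (\<Sum>s\<in>V. A * u t s * B)" by (simp add: sum_distrib_left sum_distrib_right)
  finally show ?thesis .
qed

lemma ins_col: assumes "qr u" "s \<in> V" shows "A * B = (\<Sum>t\<in>V. A * u t s * B)"
proof -
  have "A * B = A * (\<Sum>t\<in>V. u t s) * B" using assms unfolding qr_def by simp
  also have "\<dots> = (\<Sum>t\<in>V. A * u t s * B)" by (simp add: sum_distrib_left sum_distrib_right)
  finally show ?thesis .
qed

lemma sum_single: "s0 \<in> V \<Longrightarrow> (\<And>s. s \<in> V \<Longrightarrow> s \<noteq> s0 \<Longrightarrow> f s = 0) \<Longrightarrow> sum f V = f s0"
proof -
  assume s0: "s0 \<in> V" and z: "\<And>s. s \<in> V \<Longrightarrow> s \<noteq> s0 \<Longrightarrow> f s = 0"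
  have "sum f V = sum f {s0}" by (rule sum.mono_neutral_right) (use fin s0 z in auto)
  then show ?thesis by simp
qed

lemma row_single: assumes "qr u" "t \<in> V" "s0 \<in> V" "\<And>s. s \<in> V \<Longrightarrow> s \<noteq> s0 \<Longrightarrow> A * u t s * B = 0"
  shows "A * B = A * u t s0 * B"
  using ins_row[OF assms(1,2), of A B] sum_single[OF assms(3), of "\<lambda>s. A * u t s * B"] assms(4) by simp

lemma three: "(X::'a::real_algebra_1) = of_nat 3 * X \<Longrightarrow> X = 0"
proof -
  assume h: "X = of_nat 3 * X"
  have "of_nat 3 * X = (3::real) *\<^sub>R X" by (simp add: scaleR_conv_of_real)
  then have "X = (3::real) *\<^sub>R X" using h by simp
  then have "(2::real) *\<^sub>R X = 0"
    by (metis (no_types, lifting) add_diff_cancel_right' diff_self numeral_Bit1 numeral_One one_add_one scaleR_add_left scaleR_one)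
  then show ?thesis by simp
qed

lemma orth: assumes qr: "qr u" and V: "i \<in> V" "j \<in> V" "m \<in> V" and ne: "j \<noteq> m"
  shows "u i j * u i m = 0"
proof (cases "E j m")
  case True then show ?thesis using r3[OF qr V(1,2) V(1,3)] irr by blast
next
  case False
  have "{w\<in>V. E i w} \<noteq> {}" using deg[OF V(1)] by (metis card.empty zero_neq_numeral)
  then obtain t0 where t0: "E i t0" by blast
  have key: "u i j * u i m = u i j * u t s0 * u i m" if t: "E i t" and s0: "E j s0" "E s0 m" for t s0
  proof (rule row_single[OF qr])
    show "t \<in> V" "s0 \<in> V" using t s0 inV by auto
    fix s assume s: "s \<in> V" "s \<noteq> s0"
    show "u i j * u t s * u i m = 0"
    proof (cases "E j s")
      case False
      then have "u i j * u t s = 0" using r3[OF qr V(1,2) _ s(1)] t inV by blast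
      then show ?thesis by simp
    next
      case True
      show ?thesis
      proof (cases "E s m")
        case False
        then have "u t s * u i m = 0" using r3[OF qr _ s(1) V(1,3)] t inV esym by blast
        then show ?thesis by (simp add: mult.assoc)
      next
        case True
        then show ?thesis using no4[of j s0 m s] \<open>E j s\<close> s0 esym ne s(2) by blast
      qed
    qed
  qed
  show ?thesis
  proof (cases "\<exists>s0. E j s0 \<and> E s0 m")
    case True
    then obtain s0 where s0: "E j s0" "E s0 m" by blast
    have s0V: "s0 \<in> V" using s0 inV by auto
    let ?X = "u i j * u i m"
    have "?X = (\<Sum>t\<in>V. u i j * u t s0 * u i m)" by (rule ins_col[OF qr s0V])
    also have "\<dots> = (\<Sum>t\<in>{w\<in>V. E i w}. u i j * u t s0 * u i m)"
    proof (rule sum.mono_neutral_right)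
      show "finite V" by (rule fin)
      show "{w \<in> V. E i w} \<subseteq> V" by auto
      show "\<forall>t\<in>V - {w \<in> V. E i w}. u i j * u t s0 * u i m = 0"
      proof
        fix t assume "t \<in> V - {w \<in> V. E i w}"
        then have "u i j * u t s0 = 0" using r3[OF qr V(1,2) _ s0V] s0 by auto
        then show "u i j * u t s0 * u i m = 0" by simp
      qed
    qed
    also have "\<dots> = (\<Sum>t\<in>{w\<in>V. E i w}. ?X)"
      by (rule sum.cong) (use key s0 in auto)
    also have "\<dots> = of_nat 3 * ?X" using deg[OF V(1)] by simp
    finally show ?thesis by (rule three)
  next
    case False
    have "u i j * u i m = (\<Sum>s\<in>V. u i j * u t0 s * u i m)" by (rule ins_row[OF qr]) (use t0 inV in auto)
    also have "\<dots> = 0"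
    proof (rule sum.neutral, intro ballI)
      fix s assume s: "s \<in> V"
      show "u i j * u t0 s * u i m = 0"
      proof (cases "E j s")
        case False
        then have "u i j * u t0 s = 0" using r3[OF qr V(1,2) _ s] t0 inV by blast
        then show ?thesis by simp
      next
        case True
        then have "\<not> E s m" using \<open>\<not> (\<exists>s0. E j s0 \<and> E s0 m)\<close> by blast
        then have "u t0 s * u i m = 0" using r3[OF qr _ s V(1,3)] t0 inV esym by blast
        then show ?thesis by (simp add: mult.assoc)
      qed
    qed
    finally show ?thesis .
  qed
qed

lemma factA1: assumes qr: "qr u"
  shows "\<forall>t t' s s'. t \<in> V \<longrightarrow> t' \<in> V \<longrightarrow> s \<in> V \<longrightarrow> s' \<in> V \<longrightarrow> gdist E t t' = n
     \<longrightarrow> n < gdist E s s' \<longrightarrow> u t s * u t' s' = 0"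
proof (induction n)
  case 0
  show ?case
  proof (intro allI impI)
    fix t t' s s' assume h: "t \<in> V" "t' \<in> V" "s \<in> V" "s' \<in> V" "gdist E t t' = 0" "0 < gdist E s s'"
    have "t = t'" using d_eq0 h by blast
    moreover have "s \<noteq> s'" using h by auto
    ultimately show "u t s * u t' s' = 0" using orth[OF qr] h by blast
  qed
next
  case (Suc n)
  show ?case
  proof (intro allI impI)
    fix t t' s s' assume h: "t \<in> V" "t' \<in> V" "s \<in> V" "s' \<in> V" "gdist E t t' = Suc n" "Suc n < gdist E s s'"
    obtain c where c: "E c t'" "gdist E t c = n" using d_step'[OF h(1,2) h(5)] by auto
    have cV: "c \<in> V" using c inV by auto
    have "u t s * u t' s' = (\<Sum>e\<in>V. u t s * u c e * u t' s')" by (rule ins_row[OF qr cV])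
    also have "\<dots> = 0"
    proof (rule sum.neutral, intro ballI)
      fix e assume e: "e \<in> V"
      show "u t s * u c e * u t' s' = 0"
      proof (cases "E e s'")
        case False
        then have "u c e * u t' s' = 0" using r3[OF qr cV e h(2,4)] c by blast
        then show ?thesis by (simp add: mult.assoc)
      next
        case True
        have "gdist E s s' \<le> gdist E s e + 1" using d_tri[OF h(3) True] .
        then have "n < gdist E s e" using h(6) by simp
        then have "u t s * u c e = 0" using Suc.IH h(1,3) cV e c(2) by blast
        then show ?thesis by simp
      qed
    qed
    finally show "u t s * u t' s' = 0" .
  qed
qed

lemma factA: assumes qr: "qr u" and V: "t \<in> V" "t' \<in> V" "s \<in> V" "s' \<in> V"
  and ne: "gdist E t t' \<noteq> gdist E s s'"
  shows "u t s * u t' s' = 0"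
proof (cases "gdist E t t' < gdist E s s'")
  case True then show ?thesis using factA1[OF qr] V by blast
next
  case False
  then have "gdist E s s' < gdist E t t'" using ne by simp
  then show ?thesis using factA1[OF qr_T[OF qr], of "gdist E s s'"] V by blast
qed


lemma main:
  assumes qr: "qr u"
    and V: "i \<in> V" "j \<in> V" "k \<in> V" "l \<in> V" "x \<in> V" "q \<in> V"
    and dik: "gdist E i k = 3" and djl: "gdist E j l = 3"
    and ejx: "E j x" and dxl: "gdist E x l = 2"
    and exq: "E x q" and dqj: "gdist E q j = 2" and dql: "gdist E q l = 3"
  shows "u i j * u k l = u i j * u k l * (u i j + u i q)"
proof -
  obtain a where a: "E i a" "gdist E a k = 2" using d_step[OF V(1,3)] dik by (metis numeral_3_eq_3 numeral_2_eq_2)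
  have aV: "a \<in> V" using a inV by auto
  obtain y where y0: "E x y" "gdist E y l = 1" using d_step[OF V(5,4)] dxl by (metis numeral_2_eq_2 One_nat_def)
  have yV: "y \<in> V" using y0 inV by auto
  have eyl: "E y l" using d_one[OF yV V(4)] y0 by simp
  obtain b where b0: "E a b" "gdist E b k = 1" using d_step[OF aV V(3)] a by (metis numeral_2_eq_2 One_nat_def)
  have bV: "b \<in> V" using b0 inV by auto
  have ebk: "E b k" using d_one[OF bV V(3)] b0 by simp
  have dki: "gdist E k i = 3" using dik d_sym V by simp
  have dka: "gdist E k a = 2" using a d_sym V aV by simp
  have dlj: "gdist E l j = 3" using djl d_sym V by simp
  have dlx: "gdist E l x = 2" using dxl d_sym V by simp
  have dly: "gdist E l y = 1" using d_edge[OF esym[OF eyl]] .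
  have jq: "j \<noteq> q" using dqj by auto
  have jy: "j \<noteq> y" using djl y0 by auto
  have yq: "y \<noteq> q" using dql y0 by auto
  have xl: "x \<noteq> l" using dxl by auto
  have L: "u i j * u k l = u i j * u a x * u k l"
  proof (rule row_single[OF qr aV V(5)])
    fix s assume s: "s \<in> V" "s \<noteq> x"
    show "u i j * u a s * u k l = 0"
    proof (cases "E j s")
      case False
      then have "u i j * u a s = 0" using r3[OF qr V(1,2) aV s(1)] a by blast
      then show ?thesis by simp
    next
      case True
      have "gdist E l s \<noteq> 2"
        using uniq_mid[OF V(4,2) dlj ejx True dlx] s by auto
      then have "gdist E s l \<noteq> 2" using d_sym s V by simp
      then have "u a s * u k l = 0" using factA[OF qr aV V(3) s(1) V(4)] a by simp
      then show ?thesis by (simp add: mult.assoc)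
    qed
  qed
  have F: "u i j * u k l * u i m = 0" if m: "m \<in> V" "m \<noteq> j" "m \<noteq> q" for m
  proof (cases "gdist E l m = 3")
    case False
    then have "u k l * u i m = 0" using factA[OF qr V(3,1,4) m(1)] dki by simp
    then show ?thesis by (simp add: mult.assoc)
  next
    case True
    have dml: "gdist E m l = 3" using True d_sym m V by simp
    obtain p where p: "E m p" "gdist E p l = 2" using d_step[OF m(1) V(4)] dml by (metis numeral_3_eq_3 numeral_2_eq_2)
    have pV: "p \<in> V" using p inV by auto
    have dlp: "gdist E l p = 2" using p d_sym pV V by simp
    have R: "u k l * u i m = u k l * u a p * u i m"
    proof (rule row_single[OF qr aV pV])
      fix s assume s: "s \<in> V" "s \<noteq> p"
      show "u k l * u a s * u i m = 0"
      proof (cases "E s m")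
        case False
        then have "u a s * u i m = 0" using r3[OF qr aV s(1) V(1) m(1)] a esym by blast
        then show ?thesis by (simp add: mult.assoc)
      next
        case True
        have "gdist E l s \<noteq> 2"
          using uniq_mid[OF V(4) m(1) \<open>gdist E l m = 3\<close> p(1) esym[OF True] dlp] s by auto
        then have "u k l * u a s = 0" using factA[OF qr V(3) aV V(4) s(1)] dka by simp
        then show ?thesis by simp
      qed
    qed
    have px: "p \<noteq> x"
    proof
      assume "p = x"
      then have "E x m" using p esym by simp
      then have "m = j \<or> m = y \<or> m = q" using nbr3[OF esym[OF ejx] y0(1) exq jy jq yq] by blast
      then show False using m dly True by auto
    qed
    obtain r where r0: "E l r" "gdist E r p = 1" using d_step[OF V(4) pV] dlp by (metis numeral_2_eq_2 One_nat_def)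
    have rV: "r \<in> V" using r0 inV by auto
    have erp: "E r p" using d_one[OF rV pV] r0 by simp
    have Z: "u a x * u k l * u a p = 0"
    proof (cases "r = y")
      case True
      have eyp: "E y p" using erp True by simp
      have "u a x * u a p = u a x * u k l * u a p"
      proof (rule row_single[OF qr V(3) V(4)])
        fix l' assume l': "l' \<in> V" "l' \<noteq> l"
        show "u a x * u k l' * u a p = 0"
        proof (cases "gdist E x l' = 2")
          case False
          then have "u a x * u k l' = 0" using factA[OF qr aV V(3) V(5) l'(1)] a by simp
          then show ?thesis by simp
        next
          case True
          show ?thesis
          proof (cases "gdist E l' p = 2")
            case False
            then have "u k l' * u a p = 0" using factA[OF qr V(3) aV l'(1) pV] dka by simp
            then show ?thesis by (simp add: mult.assoc)
          next
            case True2: True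
            have "gdist E p l' = 2" using True2 d_sym pV l' by simp
            then have False
              using branch[OF esym[OF y0(1)] eyp eyl px[symmetric] dxl p(2) l' \<open>gdist E x l' = 2\<close>] by simp
            then show ?thesis ..
          qed
        qed
      qed
      moreover have "u a x * u a p = 0" using orth[OF qr aV V(5) pV] px by simp
      ultimately show ?thesis by simp
    next
      case False
      have L2: "u a x * u k l = u a x * u b y * u k l"
      proof (rule row_single[OF qr bV yV])
        fix s assume s: "s \<in> V" "s \<noteq> y"
        show "u a x * u b s * u k l = 0"
        proof (cases "E x s")
          case False
          then have "u a x * u b s = 0" using r3[OF qr aV V(5) bV s(1)] b0 by blast
          then show ?thesis by simp
        next
          case True
          show ?thesis
          proof (cases "E s l")
            case False
            then have "u b s * u k l = 0" using r3[OF qr bV s(1) V(3,4)] ebk by blast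
            then show ?thesis by (simp add: mult.assoc)
          next
            case True2: True
            have "s = y" using cn_uniq[OF \<open>E x s\<close> True2 y0(1) eyl xl] .
            then show ?thesis using s by simp
          qed
        qed
      qed
      have lp: "l \<noteq> p" using dlp by auto
      have R2: "u k l * u a p = u k l * u b r * u a p"
      proof (rule row_single[OF qr bV rV])
        fix s assume s: "s \<in> V" "s \<noteq> r"
        show "u k l * u b s * u a p = 0"
        proof (cases "E l s")
          case False
          then have "u k l * u b s = 0" using r3[OF qr V(3,4) bV s(1)] ebk esym by blast
          then show ?thesis by simp
        next
          case True
          show ?thesis
          proof (cases "E s p")
            case False
            then have "u b s * u a p = 0" using r3[OF qr bV s(1) aV pV] b0 esym by blast
            then show ?thesis by (simp add: mult.assoc)
          next
            case True2: True
            have "s = r" using cn_uniq[OF \<open>E l s\<close> True2 r0(1) erp lp] .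
            then show ?thesis using s by simp
          qed
        qed
      qed
      have AC: "u b y * u k l * u b r = 0"
      proof -
        have "u b y * u b r = u b y * u k l * u b r"
        proof (rule row_single[OF qr V(3) V(4)])
          fix l' assume l': "l' \<in> V" "l' \<noteq> l"
          show "u b y * u k l' * u b r = 0"
          proof (cases "E y l'")
            case False
            then have "u b y * u k l' = 0" using r3[OF qr bV yV V(3) l'(1)] ebk by blast
            then show ?thesis by simp
          next
            case True
            show ?thesis
            proof (cases "E l' r")
              case False
              then have "u k l' * u b r = 0" using r3[OF qr V(3) l'(1) bV rV] ebk esym by blast
              then show ?thesis by (simp add: mult.assoc)
            next
              case True2: True
              have False using no4[of y l r l'] eyl r0(1) True2 True esym \<open>r \<noteq> y\<close> l'(2) by metis
              then show ?thesis ..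
            qed
          qed
        qed
        moreover have "u b y * u b r = 0" using orth[OF qr bV yV rV] \<open>r \<noteq> y\<close> by simp
        ultimately show ?thesis by simp
      qed
      have "u a x * u k l * u a p = u a x * u b y * u k l * u a p" using L2 by simp
      also have "\<dots> = u a x * u b y * (u k l * u a p)" by (simp add: mult.assoc)
      also have "\<dots> = u a x * u b y * (u k l * u b r * u a p)" using R2 by simp
      also have "\<dots> = u a x * (u b y * u k l * u b r) * u a p" by (simp add: mult.assoc)
      also have "\<dots> = 0" using AC by simp
      finally show ?thesis .
    qed
    have "u i j * u k l * u i m = u i j * u a x * u k l * u i m" using L by simp
    also have "\<dots> = u i j * u a x * (u k l * u i m)" by (simp add: mult.assoc)
    also have "\<dots> = u i j * u a x * (u k l * u a p * u i m)" using R by simp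
    also have "\<dots> = u i j * (u a x * u k l * u a p) * u i m" by (simp add: mult.assoc)
    also have "\<dots> = 0" using Z by simp
    finally show ?thesis .
  qed
  have "u i j * u k l = (\<Sum>m\<in>V. u i j * u k l * u i m)"
  proof -
    have "u i j * u k l = u i j * u k l * (\<Sum>m\<in>V. u i m)" using qr V(1) unfolding qr_def by simp
    then show ?thesis by (simp add: sum_distrib_left)
  qed
  also have "\<dots> = (\<Sum>m\<in>{j,q}. u i j * u k l * u i m)"
    by (rule sum.mono_neutral_right) (use fin V F in auto)
  also have "\<dots> = u i j * u k l * (u i j + u i q)" using jq by (simp add: distrib_left)
  finally show ?thesis .
qed

end

theorem lemma5p5:
  fixes V :: "'v set" and E :: "'v \<Rightarrow> 'v \<Rightarrow> bool"
    and b c :: "nat \<Rightarrow> nat"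
    and i j k l x q :: 'v
    and st :: "'a::{real_normed_algebra_1,banach} \<Rightarrow> 'a" and iota :: 'a
    and u :: "'v \<Rightarrow> 'v \<Rightarrow> 'a"
  assumes drg: "distance_regular_graph V E b c"
    and cubic: "regular_graph V E 3"
    and size: "card V \<ge> 10"
    and diam: "diameter V E \<ge> 3"
    and b2: "b 2 = 2"
    and girth: "girth_at_least E 7"
    and verts: "i \<in> V" "j \<in> V" "k \<in> V" "l \<in> V"
    and dik: "gdist E i k = 3" and djl: "gdist E j l = 3"
    and x: "x \<in> V" "E j x" "gdist E x l = 2"
    and q: "q \<in> V" "E x q" "gdist E q j = 2" "gdist E q l = 3"
    and cstar: "cstar_algebra st iota"
    and rel: "qaut_relations V E st u"
  shows "u i j * u k l = u i j * u k l * (u i j + u i q)"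
  proof -
  have sg: "simple_graph V E" and cn: "connected_graph V E"
    using drg unfolding distance_regular_graph_def by auto
  interpret cg V E
  proof
    show "finite V" using sg unfolding simple_graph_def by auto
    show "\<And>a b. E a b \<Longrightarrow> a \<in> V \<and> b \<in> V" using sg unfolding simple_graph_def by auto
    show "\<And>a b. E a b \<Longrightarrow> E b a" using sg unfolding simple_graph_def by auto
    show "\<And>a. \<not> E a a" using sg unfolding simple_graph_def by auto
    show "\<And>v w. v \<in> V \<Longrightarrow> w \<in> V \<Longrightarrow> \<exists>k. (E ^^ k) v w" using cn unfolding connected_graph_def by auto
    show "\<And>v. v \<in> V \<Longrightarrow> card {w\<in>V. E v w} = 3" using cubic unfolding regular_graph_def by auto
    show "girth_at_least E 7" by (rule girth)
  qed
  have "qr u" using rel unfolding qr_def qaut_relations_def by blast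
  then show ?thesis using main verts dik djl x q by blast
qed

end
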